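(* In the two-tier residency matching game described in the context, suppose $v>\frac{e}{e-1}$, doctors submit lists of length $K\ge 1$, and in the symmetric equilibrium low-tier doctors send at least one application to low-tier hospitals. Then, under the large market approximation, the social welfare of this equilibrium is not less than the social welfare of SIMPLE.
   Context: Model: there are $n$ high-tier and $rn$ low-tier doctors ($r>0$), and $n$ high-tier and $rn$ low-tier hospitals, each with one position. Every hospital prefers every high doctor to every low doctor and every doctor prefers every high hospital to every low hospital; within a tier, preferences are independent uniformly random permutations. Each doctor submits a ranked list of exactly $K$ hospitals: a strategy $(k,K-k)$ lists his $k$ most preferred high hospitals followed by his $K-k$ most preferred low hospitals. Hospitals submit full true rankings; doctor-proposing deferred acceptance is run. Values: a doctor gets $v>1$ if matched to a high hospital, $1$ if matched to a low one, $0$ if unmatched; a hospital gets $v$ from a high doctor, $1$ from a low doctor, $0$ if unfilled; social welfare is the sum of all agents' values. Large market approximation: $n\to\infty$ with $r,K,v$ fixed; each application is accepted independently with a probability determined by the aggregate strategy profile via fixed-point equations (expected matched doctors = expected hospitals receiving at least one admissible application; a hospital receiving on average $\lambda$ applications gets none with probability $e^{-\lambda}$; low doctors' applications to hospitals already taken by high doctors are rejected). Equilibrium: symmetric Nash equilibrium (all doctors of a tier use the same, possibly mixed, strategy, each maximizing expected value given the acceptance probabilities). SIMPLE: the outcome when every doctor submits a single application to his most preferred hospital in his own tier; its welfare is $2(v+r)n(1-1/e)$. *)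

theory Defs
  imports Complex_Main
begin

text \<open>All quantities are
  normalised per n (the number of high-tier doctors); total quantities are n times them.
  A mixed strategy of a tier is a probability vector alpha over k in {0..K}, where
  alpha k is the probability of playing strategy (k, K-k).\<close>

definition mixed :: "nat \<Rightarrow> (nat \<Rightarrow> real) \<Rightarrow> bool" where
  "mixed K \<alpha> \<longleftrightarrow> (\<forall>k. 0 \<le> \<alpha> k) \<and> (\<Sum>k\<le>K. \<alpha> k) = 1"

text \<open>Expected number of applications actually sent (processed by deferred acceptance)
  by a doctor with k applications in a tier, each accepted independently with prob. p.\<close>
definition napps :: "nat \<Rightarrow> real \<Rightarrow> real" where
  "napps k p = (\<Sum>j<k. (1 - p) ^ j)"

text \<open>Acceptance probability of an admissible application when each hospital receives on
  average lam admissible applications (Poisson): (1 - exp(-lam))/lam, and 1 if lam = 0.\<close>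
definition acc :: "real \<Rightarrow> real" where
  "acc lam = (if lam = 0 then 1 else (1 - exp (- lam)) / lam)"

text \<open>Expected value of a doctor playing (k, K-k), with acceptance probabilities p (own
  applications to high hospitals) and q (own applications to low hospitals).\<close>
definition util :: "real \<Rightarrow> nat \<Rightarrow> real \<Rightarrow> real \<Rightarrow> nat \<Rightarrow> real" where
  "util v K p q k = v * (1 - (1 - p) ^ k) + (1 - p) ^ k * (1 - (1 - q) ^ (K - k))"

definition matchprob :: "nat \<Rightarrow> real \<Rightarrow> real \<Rightarrow> nat \<Rightarrow> real" where
  "matchprob K p q k = (1 - (1 - p) ^ k) + (1 - p) ^ k * (1 - (1 - q) ^ (K - k))"

text \<open>Fixed-point equations of the large market approximation.
  a: high doctor -> high hospital; b: high doctor -> low hospital;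
  c: low doctor -> high hospital; d: low doctor -> low hospital.
  Low doctors' applications to hospitals already taken by high doctors are rejected;
  hfree / lfree are the fractions of high / low hospitals not taken by high doctors.\<close>
definition fixed_point :: "real \<Rightarrow> nat \<Rightarrow> (nat \<Rightarrow> real) \<Rightarrow> (nat \<Rightarrow> real)
    \<Rightarrow> real \<Rightarrow> real \<Rightarrow> real \<Rightarrow> real \<Rightarrow> bool" where
  "fixed_point r K \<alpha> \<beta> a b c d \<longleftrightarrow>
     (let hfree = 1 - (\<Sum>k\<le>K. \<alpha> k * (1 - (1 - a) ^ k));
          lfree = 1 - (\<Sum>k\<le>K. \<alpha> k * (1 - a) ^ k * (1 - (1 - b) ^ (K - k))) / r
      in 0 \<le> a \<and> a \<le> 1 \<and> 0 \<le> b \<and> b \<le> 1 \<and> 0 \<le> c \<and> c \<le> 1 \<and> 0 \<le> d \<and> d \<le> 1 \<and>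
         a = acc (\<Sum>k\<le>K. \<alpha> k * napps k a) \<and>
         b = acc ((\<Sum>k\<le>K. \<alpha> k * (1 - a) ^ k * napps (K - k) b) / r) \<and>
         c = hfree * acc (r * (\<Sum>k\<le>K. \<beta> k * napps k c)) \<and>
         d = lfree * acc (\<Sum>k\<le>K. \<beta> k * (1 - c) ^ k * napps (K - k) d))"

definition equilibrium :: "real \<Rightarrow> real \<Rightarrow> nat \<Rightarrow> (nat \<Rightarrow> real) \<Rightarrow> (nat \<Rightarrow> real)
    \<Rightarrow> real \<Rightarrow> real \<Rightarrow> real \<Rightarrow> real \<Rightarrow> bool" where
  "equilibrium r v K \<alpha> \<beta> a b c d \<longleftrightarrow>
     mixed K \<alpha> \<and> mixed K \<beta> \<and> fixed_point r K \<alpha> \<beta> a b c d \<and>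
     (\<forall>k\<le>K. 0 < \<alpha> k \<longrightarrow> (\<forall>k'\<le>K. util v K a b k' \<le> util v K a b k)) \<and>
     (\<forall>k\<le>K. 0 < \<beta> k \<longrightarrow> (\<forall>k'\<le>K. util v K c d k' \<le> util v K c d k))"

text \<open>Social welfare (sum of all doctors' and hospitals' values) in the large market
  approximation with n high-tier doctors (and r n low-tier doctors).
  A hospital gets v from a matched high doctor and 1 from a matched low doctor.\<close>
definition welfare :: "nat \<Rightarrow> real \<Rightarrow> real \<Rightarrow> nat \<Rightarrow> (nat \<Rightarrow> real) \<Rightarrow> (nat \<Rightarrow> real)
    \<Rightarrow> real \<Rightarrow> real \<Rightarrow> real \<Rightarrow> real \<Rightarrow> real" where
  "welfare n r v K \<alpha> \<beta> a b c d = real n *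
     ((\<Sum>k\<le>K. \<alpha> k * util v K a b k) + r * (\<Sum>k\<le>K. \<beta> k * util v K c d k)
      + v * (\<Sum>k\<le>K. \<alpha> k * matchprob K a b k)
      + r * (\<Sum>k\<le>K. \<beta> k * matchprob K c d k))"

text \<open>Welfare of SIMPLE (every doctor applies only to his favourite hospital of his own tier).\<close>
definition simple_welfare :: "nat \<Rightarrow> real \<Rightarrow> real \<Rightarrow> real" where
  "simple_welfare n r v = 2 * (v + r) * real n * (1 - exp (-1))"

end

theory Submission
  imports Defs "HOL-Analysis.Convex"
begin

lemma napps_id: "1 - (1 - p) ^ m = p * napps m p"
  unfolding napps_def
proof (induction m)
  case 0 then show ?case by simp
next
  case (Suc m)
  have "1 - (1 - p) ^ Suc m = (1 - (1 - p) ^ m) + p * (1-p)^m" by (simp add: algebra_simps)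
  also have "\<dots> = p * (\<Sum>j<Suc m. (1 - p) ^ j)" using Suc by (simp add: algebra_simps)
  finally show ?case .
qed

lemma napps_nonneg: "0 \<le> p \<Longrightarrow> p \<le> 1 \<Longrightarrow> 0 \<le> napps m p"
  unfolding napps_def by (intro sum_nonneg) simp

lemma napps_ge1: "1 \<le> m \<Longrightarrow> 0 \<le> p \<Longrightarrow> p \<le> 1 \<Longrightarrow> 1 \<le> napps m p"
proof -
  assume m: "1 \<le> m" and p: "0 \<le> p" "p \<le> 1"
  have "napps m p = (\<Sum>j\<in>{..<m}. (1-p)^j)" by (simp add: napps_def)
  also have "\<dots> \<ge> (\<Sum>j\<in>{0}. (1-p)^j)"
    using p m by (intro sum_mono2) auto
  finally show ?thesis by simp
qed

lemma acc_mul: "acc x * x = 1 - exp (- x)"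
  unfolding acc_def by auto

lemma exp_conc: "0 \<le> (x::real) \<Longrightarrow> x \<le> 1 \<Longrightarrow> x * (1 - exp (-1)) \<le> 1 - exp (- x)"
proof -
  assume x: "0 \<le> x" "x \<le> 1"
  have "exp ((1 - x) *\<^sub>R 0 + x *\<^sub>R (-1)) \<le> (1 - x) * exp 0 + x * exp (-1)"
    using convex_onD[OF exp_convex, of x 0 "-1"] x by simp
  then show ?thesis by (simp add: algebra_simps)
qed

lemma acc_lb: "0 \<le> (x::real) \<Longrightarrow> x \<le> 1 \<Longrightarrow> 1 - exp (-1) \<le> acc x"
proof (cases "x = 0")
  case True then show ?thesis by (simp add: acc_def)
next
  case False
  assume x: "0 \<le> x" "x \<le> 1"
  then have "x > 0" using False by simp
  then show ?thesis using exp_conc[OF x] False by (simp add: acc_def field_simps)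
qed

lemma acc_nonneg: "0 \<le> (x::real) \<Longrightarrow> 0 \<le> acc x"
  unfolding acc_def by (auto intro!: divide_nonneg_nonneg)


theorem lemma5:
  fixes n K :: nat and r v a b c d :: real and \<alpha> \<beta> :: "nat \<Rightarrow> real"
  assumes "0 < r"
    and "v > exp 1 / (exp 1 - 1)"
    and "1 \<le> K"
    and "equilibrium r v K \<alpha> \<beta> a b c d"
    and "\<forall>k\<le>K. 0 < \<beta> k \<longrightarrow> k < K"
  shows "welfare n r v K \<alpha> \<beta> a b c d \<ge> simple_welfare n r v"
proof -
  note r = assms(1) and K = assms(3) and bsup = assms(5)
  define q where "q = exp (-1::real)"
  have q0: "0 < q" "q < 1" unfolding q_def by auto
  have e1: "exp (1::real) > 1" by simp
  have "v * (exp 1 - 1) > exp 1" using assms(2) e1 by (simp add: field_simps)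
  then have vq: "v * (1 - q) > 1" unfolding q_def using e1
    by (simp add: exp_minus field_simps)
  have "exp 1 / (exp 1 - 1) > (0::real)" using e1 by simp
  then have v0: "v > 0" using assms(2) by linarith
  have "v * (1 - q) \<le> v" using v0 q0 by (simp add: mult_left_le_one_le)
  then have v1: "v > 1" using vq by linarith
  from assms(4) have mA: "mixed K \<alpha>" and mB: "mixed K \<beta>"
    and fp: "fixed_point r K \<alpha> \<beta> a b c d"
    and eqA: "\<forall>k\<le>K. 0 < \<alpha> k \<longrightarrow> (\<forall>k'\<le>K. util v K a b k' \<le> util v K a b k)"
    unfolding equilibrium_def by auto
  have \<alpha>0: "\<And>k. 0 \<le> \<alpha> k" and \<alpha>1: "(\<Sum>k\<le>K. \<alpha> k) = 1" using mA unfolding mixed_def by auto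
  have \<beta>0: "\<And>k. 0 \<le> \<beta> k" and \<beta>1: "(\<Sum>k\<le>K. \<beta> k) = 1" using mB unfolding mixed_def by auto
  define lam where "lam = (\<Sum>k\<le>K. \<alpha> k * napps k a)"
  define lb where "lb = (\<Sum>k\<le>K. \<alpha> k * (1 - a) ^ k * napps (K - k) b) / r"
  define nu where "nu = (\<Sum>k\<le>K. \<beta> k * (1 - c) ^ k * napps (K - k) d)"
  define H where "H = (\<Sum>k\<le>K. \<alpha> k * (1 - (1 - a) ^ k))"
  define L1 where "L1 = (\<Sum>k\<le>K. \<alpha> k * (1 - a) ^ k * (1 - (1 - b) ^ (K - k)))"
  define C' where "C' = (\<Sum>k\<le>K. \<beta> k * (1 - (1 - c) ^ k))"
  define D' where "D' = (\<Sum>k\<le>K. \<beta> k * (1 - c) ^ k * (1 - (1 - d) ^ (K - k)))"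
  have a01: "0 \<le> a" "a \<le> 1" and b01: "0 \<le> b" "b \<le> 1" and c01: "0 \<le> c" "c \<le> 1"
    and d01: "0 \<le> d" "d \<le> 1"
    and aeq: "a = acc lam" and beq: "b = acc lb"
    and deq: "d = (1 - L1 / r) * acc nu"
    using fp unfolding fixed_point_def Let_def lam_def lb_def nu_def L1_def by auto
  have lam0: "0 \<le> lam" unfolding lam_def
    using a01 by (intro sum_nonneg mult_nonneg_nonneg \<alpha>0 napps_nonneg) auto
  have lb0: "0 \<le> lb" unfolding lb_def
    using a01 b01 r by (intro divide_nonneg_nonneg sum_nonneg mult_nonneg_nonneg \<alpha>0 napps_nonneg) auto
  have nu0: "0 \<le> nu" unfolding nu_def
    using c01 d01 by (intro sum_nonneg mult_nonneg_nonneg \<beta>0 napps_nonneg) auto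
  have "H = (\<Sum>k\<le>K. a * (\<alpha> k * napps k a))" unfolding H_def
    by (intro sum.cong refl) (simp add: napps_id)
  also have "\<dots> = a * lam" unfolding lam_def by (simp add: sum_distrib_left)
  finally have Heq: "H = 1 - exp (- lam)" using aeq acc_mul by simp
  have "L1 = (\<Sum>k\<le>K. b * (\<alpha> k * (1 - a) ^ k * napps (K - k) b))" unfolding L1_def
    by (intro sum.cong refl) (simp add: napps_id)
  also have "\<dots> = b * (\<Sum>k\<le>K. \<alpha> k * (1 - a) ^ k * napps (K - k) b)" by (simp add: sum_distrib_left)
  also have "\<dots> = b * (r * lb)" unfolding lb_def using r by simp
  finally have "L1 = r * (acc lb * lb)" using beq by simp
  then have L1eq: "L1 = r * (1 - exp (- lb))" by (simp only: acc_mul)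
  have lfree: "1 - L1 / r = exp (- lb)" using L1eq r by simp
  have "D' = (\<Sum>k\<le>K. d * (\<beta> k * (1 - c) ^ k * napps (K - k) d))" unfolding D'_def
    by (intro sum.cong refl) (simp add: napps_id)
  also have "\<dots> = d * nu" unfolding nu_def by (simp add: sum_distrib_left)
  finally have D'eq: "D' = exp (- lb) * (1 - exp (- nu))" using deq lfree acc_mul[of nu] by simp
  have C'0: "0 \<le> C'" unfolding C'_def using c01
    by (intro sum_nonneg mult_nonneg_nonneg \<beta>0) (simp add: power_le_one)
  have L10: "0 \<le> L1" using L1eq r lb0 by simp
  have lam1: "1 \<le> lam"
  proof (rule ccontr)
    assume "\<not> 1 \<le> lam"
    then have lt: "lam < 1" by simp
    have aq: "1 - q \<le> a" using acc_lb[of lam] lam0 lt aeq q_def by simp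
    define Y where "Y = (1 - b) ^ (K - 1)"
    have Y01: "0 \<le> Y" "Y \<le> 1" unfolding Y_def using b01 by (auto simp: power_le_one)
    have u0: "util v K a b 0 = 1 - (1 - b) * Y"
      unfolding util_def Y_def using K by (simp add: power_eq_if)
    have u1: "util v K a b 1 = v * a + (1 - a) * (1 - Y)"
      unfolding util_def Y_def by simp
    have "a * (v - 1 + Y) \<ge> (1 - q) * (v - 1 + Y)"
      using aq v1 Y01 by (intro mult_right_mono) auto
    moreover have "(1 - q) * (v - 1 + Y) > Y"
    proof -
      have "(1 - q) * (v - 1 + Y) = v * (1 - q) - (1 - q) * (1 - Y)" by (simp add: algebra_simps)
      moreover have "(1 - q) * (1 - Y) \<le> 1 - Y" using q0 Y01 by (simp add: mult_left_le_one_le)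
      ultimately show ?thesis using vq by linarith
    qed
    moreover have "b * Y \<le> Y" using b01 Y01 by (simp add: mult_left_le_one_le)
    ultimately have "util v K a b 1 > util v K a b 0" unfolding u0 u1 by (simp add: algebra_simps)
    then have a00: "\<alpha> 0 = 0" using eqA K \<alpha>0[of 0] by force
    have "(\<Sum>k\<le>K. \<alpha> k) \<le> lam" unfolding lam_def
    proof (rule sum_mono)
      fix k assume "k \<in> {..K}"
      show "\<alpha> k \<le> \<alpha> k * napps k a"
      proof (cases "k = 0")
        case True then show ?thesis using a00 by simp
      next
        case False
        then have "1 \<le> napps k a" using a01 by (intro napps_ge1) auto
        then show ?thesis using \<alpha>0[of k] by (simp add: mult_le_cancel_left1)
      qed
    qed
    then show False using \<alpha>1 lt by simp
  qed
  have Hq: "1 - q \<le> H" unfolding Heq q_def using lam1 by simp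
  have M'eq: "(\<Sum>k\<le>K. \<beta> k * matchprob K c d k) = C' + D'"
    unfolding C'_def D'_def matchprob_def by (simp add: sum.distrib[symmetric] algebra_simps)
  have M'ge: "(\<Sum>k\<le>K. \<beta> k * matchprob K c d k) \<ge> d"
  proof -
    have "(\<Sum>k\<le>K. \<beta> k * d) \<le> (\<Sum>k\<le>K. \<beta> k * matchprob K c d k)"
    proof (rule sum_mono)
      fix k assume k: "k \<in> {..K}"
      show "\<beta> k * d \<le> \<beta> k * matchprob K c d k"
      proof (cases "\<beta> k = 0")
        case True then show ?thesis by simp
      next
        case False
        then have "k < K" using bsup k \<beta>0[of k] by force
        then obtain m where m: "K - k = Suc m" by (metis Suc_diff_Suc)
        have p1: "0 \<le> (1 - c) ^ k" "(1 - c) ^ k \<le> 1" using c01 by (auto simp: power_le_one)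
        have p2: "0 \<le> (1 - d) ^ m" "(1 - d) ^ m \<le> 1" using d01 by (auto simp: power_le_one)
        have "(1 - c) ^ k * ((1 - d) * (1 - d) ^ m) \<le> 1 - d"
        proof -
          have "(1 - d) * (1 - d) ^ m \<le> 1 - d" using p2 d01 by (simp add: mult_right_le_one_le)
          moreover have "0 \<le> (1 - d) * (1 - d) ^ m" using p2 d01 by simp
          ultimately show ?thesis using p1 by (meson mult_left_le_one_le order_trans)
        qed
        then have "d \<le> matchprob K c d k" unfolding matchprob_def m by (simp add: algebra_simps)
        then show ?thesis using \<beta>0[of k] by (simp add: mult_left_mono)
      qed
    qed
    then show ?thesis using \<beta>1 by (simp add: sum_distrib_right[symmetric])
  qed
  have E01: "0 < exp (- lb)" "exp (- lb) \<le> 1" using lb0 by auto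
  have low: "L1 + r * C' + r * D' \<ge> r * (1 - q)"
  proof (cases "nu \<le> 1")
    case True
    have "acc nu \<ge> 1 - q" using acc_lb[of nu] nu0 True q_def by simp
    then have "d \<ge> exp (- lb) * (1 - q)" using deq lfree E01 by (simp add: mult_left_mono)
    then have "C' + D' \<ge> exp (- lb) * (1 - q)" using M'ge M'eq by simp
    then have "r * (C' + D') \<ge> r * (exp (- lb) * (1 - q))" using r by (simp add: mult_left_mono)
    moreover have "r * (exp (- lb) * q) \<le> r * q" using r q0 E01 by (simp add: mult_left_le_one_le)
    ultimately show ?thesis using L1eq by (simp add: algebra_simps)
  next
    case False
    have "exp (- nu) \<le> q" unfolding q_def using False by simp
    then have "D' \<ge> exp (- lb) * (1 - q)" using D'eq E01 by (simp add: mult_left_mono)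
    then have "r * D' \<ge> r * (exp (- lb) * (1 - q))" using r by (simp add: mult_left_mono)
    moreover have "r * (exp (- lb) * q) \<le> r * q" using r q0 E01 by (simp add: mult_left_le_one_le)
    moreover have "r * C' \<ge> 0" using r C'0 by simp
    ultimately show ?thesis using L1eq by (simp add: algebra_simps)
  qed
  have UA: "(\<Sum>k\<le>K. \<alpha> k * util v K a b k) = v * H + L1"
    unfolding H_def L1_def util_def by (simp add: sum.distrib[symmetric] sum_distrib_left algebra_simps)
  have MA: "(\<Sum>k\<le>K. \<alpha> k * matchprob K a b k) = H + L1"
    unfolding H_def L1_def matchprob_def by (simp add: sum.distrib[symmetric] algebra_simps)
  have UB: "(\<Sum>k\<le>K. \<beta> k * util v K c d k) = v * C' + D'"
    unfolding C'_def D'_def util_def by (simp add: sum.distrib[symmetric] sum_distrib_left algebra_simps)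
  define I where "I = v * H + L1 + r * (v * C' + D') + v * (H + L1) + r * (C' + D')"
  have weq: "welfare n r v K \<alpha> \<beta> a b c d = real n * I"
    unfolding welfare_def I_def UA MA UB M'eq by simp
  have "I = 2 * v * H + 2 * (L1 + r * C' + r * D') + (v - 1) * (L1 + r * C')"
    unfolding I_def by (simp add: algebra_simps)
  moreover have "(v - 1) * (L1 + r * C') \<ge> 0" using v1 L10 C'0 r by simp
  moreover have "2 * v * H \<ge> 2 * v * (1 - q)" using Hq v1 by simp
  ultimately have "I \<ge> 2 * (v + r) * (1 - q)" using low by (simp add: algebra_simps)
  then have "real n * I \<ge> real n * (2 * (v + r) * (1 - q))" by (simp add: mult_left_mono)
  then show ?thesis unfolding weq simple_welfare_def q_def by (simp add: algebra_simps)
qed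

end
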